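(* Let $g\ge2$ and $n\ge2$. Then $P_{g,n}(a_1,\dots,a_n)$ is divisible by $\prod_{i=1}^n a_i$ in the polynomial ring $\mathbb{Q}[a_1,\dots,a_n]$, and $\tilde P(a_1,\dots,a_n):=P_{g,n}(a_1,\dots,a_n)/\prod_{i=1}^na_i$ is a polynomial of degree (at most) $2g-4+n$.
   Context: For $g\ge2$, $n\ge1$, $$P_{g,n}(a_1,\dots,a_n):=\sum_{k=1}^n\frac{(-1)^k(2g-3+k)!}{k!}\sum_{(I_1,\dots,I_k)}\ \sum_{\substack{d_1,\dots,d_k\in\mathbb{Z}_{\ge0}\\ d_1+\cdots+d_k=g-2+n}}\prod_{j=1}^k\binom{2a_{[I_j]}+1}{2d_j}\prod_{i=1}^{|I_j|-1}(2d_j+1-2i),$$ where $(I_1,\dots,I_k)$ runs over ordered $k$-tuples of nonempty pairwise disjoint subsets of $\{1,\dots,n\}$ with union $\{1,\dots,n\}$, $a_{[I]}:=\sum_{\ell\in I}a_\ell$, and $\binom{x}{m}:=x(x-1)\cdots(x-m+1)/m!$ for $m\ge0$, a polynomial in $x$ of degree $m$. *)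

theory Defs
  imports Complex_Main
begin

text \<open>Ordered k-tuples (I_1,...,I_k) of nonempty pairwise disjoint subsets of {1..n}
  with union {1..n}, represented as lists of length k (I_j = Is ! (j-1)).\<close>
definition ordered_set_partitions :: "nat \<Rightarrow> nat \<Rightarrow> nat set list set" where
  "ordered_set_partitions n k =
     {Is. length Is = k \<and> (\<forall>I\<in>set Is. I \<noteq> {}) \<and>
          (\<forall>i<k. \<forall>j<k. i \<noteq> j \<longrightarrow> Is ! i \<inter> Is ! j = {}) \<and>
          \<Union>(set Is) = {1..n}}"

definition compositions :: "nat \<Rightarrow> nat \<Rightarrow> nat list set" where
  "compositions k s = {ds. length ds = k \<and> sum_list ds = s}"

definition Pgn :: "nat \<Rightarrow> nat \<Rightarrow> (nat \<Rightarrow> rat) \<Rightarrow> rat" where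
  "Pgn g n a =
    (\<Sum>k=1..n. (-1) ^ k * fact (2 * g - 3 + k) / fact k *
       (\<Sum>Is\<in>ordered_set_partitions n k.
          \<Sum>ds\<in>compositions k (g - 2 + n).
            \<Prod>j<k. ((2 * (\<Sum>l\<in>Is ! j. a l) + 1) gchoose (2 * ds ! j)) *
                   (\<Prod>i=1..card (Is ! j) - 1.
                       (2 * of_nat (ds ! j) + 1 - 2 * of_nat i :: rat))))"

text \<open>Q is (the evaluation function of) a polynomial in Q[a_1,...,a_n] of total
  degree at most D: a finite Q-linear combination of monomials in a_1..a_n
  of total degree at most D.\<close>
definition is_poly_deg_le :: "nat \<Rightarrow> nat \<Rightarrow> ((nat \<Rightarrow> rat) \<Rightarrow> rat) \<Rightarrow> bool" where
  "is_poly_deg_le n D Q \<longleftrightarrow>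
    (\<exists>M c. finite M \<and>
       (\<forall>m\<in>M. (\<forall>i. m i \<noteq> 0 \<longrightarrow> i \<in> {1..n}) \<and> (\<Sum>i=1..n. m i) \<le> D) \<and>
       (\<forall>a. Q a = (\<Sum>m\<in>M. c m * (\<Prod>i=1..n. a i ^ m i))))"

end

theory Submission
  imports Defs
begin

definition mnm :: "nat \<Rightarrow> (nat \<Rightarrow> nat) \<Rightarrow> (nat \<Rightarrow> rat) \<Rightarrow> rat" where
  "mnm n m a = (\<Prod>i=1..n. a i ^ m i)"

lemma is_poly_def': "is_poly_deg_le n D Q \<longleftrightarrow>
    (\<exists>M c. finite M \<and>
       (\<forall>m\<in>M. (\<forall>i. m i \<noteq> 0 \<longrightarrow> i \<in> {1..n}) \<and> (\<Sum>i=1..n. m i) \<le> D) \<and>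
       (\<forall>a. Q a = (\<Sum>m\<in>M. c m * mnm n m a)))"
  unfolding is_poly_deg_le_def mnm_def by simp

lemma poly_const: "is_poly_deg_le n D (\<lambda>a. r)"
  unfolding is_poly_def'
  by (rule exI[of _ "{\<lambda>_. 0}"], rule exI[of _ "\<lambda>_. r"]) (simp add: mnm_def)

lemma poly_var:
  assumes "l \<in> {1..n}" "1 \<le> D"
  shows "is_poly_deg_le n D (\<lambda>a. a l)"
proof -
  define m0 where "m0 = (\<lambda>i::nat. if i = l then 1 else (0::nat))"
  have s: "(\<Sum>i=1..n. m0 i) = 1" using assms unfolding m0_def by simp
  have p: "mnm n m0 a = a l" for a
  proof -
    have "mnm n m0 a = (\<Prod>i=1..n. if i = l then a l else 1)"
      unfolding mnm_def m0_def by (rule prod.cong) auto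
    also have "\<dots> = a l" using assms by (simp add: prod.delta)
    finally show ?thesis .
  qed
  show ?thesis unfolding is_poly_def'
    by (rule exI[of _ "{m0}"], rule exI[of _ "\<lambda>_. 1"])
       (use s p assms in \<open>auto simp: m0_def\<close>)
qed

lemma poly_mono_deg: "is_poly_deg_le n D Q \<Longrightarrow> D \<le> D' \<Longrightarrow> is_poly_deg_le n D' Q"
  unfolding is_poly_deg_le_def by (meson order_trans)

lemma poly_add:
  assumes "is_poly_deg_le n D P" "is_poly_deg_le n D Q"
  shows "is_poly_deg_le n D (\<lambda>a. P a + Q a)"
proof -
  obtain M1 c1 where 1: "finite M1" "\<forall>m\<in>M1. (\<forall>i. m i \<noteq> 0 \<longrightarrow> i \<in> {1..n}) \<and> (\<Sum>i=1..n. m i) \<le> D"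
     "\<forall>a. P a = (\<Sum>m\<in>M1. c1 m * mnm n m a)" using assms(1) unfolding is_poly_def' by blast
  obtain M2 c2 where 2: "finite M2" "\<forall>m\<in>M2. (\<forall>i. m i \<noteq> 0 \<longrightarrow> i \<in> {1..n}) \<and> (\<Sum>i=1..n. m i) \<le> D"
     "\<forall>a. Q a = (\<Sum>m\<in>M2. c2 m * mnm n m a)" using assms(2) unfolding is_poly_def' by blast
  define c where "c m = (if m \<in> M1 then c1 m else 0) + (if m \<in> M2 then c2 m else 0)" for m
  have "P a + Q a = (\<Sum>m\<in>M1\<union>M2. c m * mnm n m a)" for a
  proof -
    have "(\<Sum>m\<in>M1\<union>M2. c m * mnm n m a) =
      (\<Sum>m\<in>M1\<union>M2. if m \<in> M1 then c1 m * mnm n m a else 0) +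
      (\<Sum>m\<in>M1\<union>M2. if m \<in> M2 then c2 m * mnm n m a else 0)"
      unfolding sum.distrib[symmetric] by (rule sum.cong) (auto simp: c_def algebra_simps)
    also have "\<dots> = (\<Sum>m\<in>M1. c1 m * mnm n m a) + (\<Sum>m\<in>M2. c2 m * mnm n m a)"
      using 1(1) 2(1)
      by (simp add: sum.inter_restrict[of "M1 \<union> M2" "\<lambda>m. c1 m * mnm n m a" M1, symmetric]
          sum.inter_restrict[of "M1 \<union> M2" "\<lambda>m. c2 m * mnm n m a" M2, symmetric] Int_absorb1 Int_absorb2)
    finally show ?thesis using 1(3) 2(3) by simp
  qed
  then show ?thesis unfolding is_poly_def' using 1 2
    by (intro exI[of _ "M1 \<union> M2"] exI[of _ c]) auto
qed

lemma mono_add: "mnm n (\<lambda>i. m1 i + m2 i) a = mnm n m1 a * mnm n m2 a"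
  unfolding mnm_def by (simp add: power_add prod.distrib)

lemma poly_mult:
  assumes "is_poly_deg_le n D1 P" "is_poly_deg_le n D2 Q"
  shows "is_poly_deg_le n (D1 + D2) (\<lambda>a. P a * Q a)"
proof -
  obtain M1 c1 where 1: "finite M1" "\<forall>m\<in>M1. (\<forall>i. m i \<noteq> 0 \<longrightarrow> i \<in> {1..n}) \<and> (\<Sum>i=1..n. m i) \<le> D1"
     "\<forall>a. P a = (\<Sum>m\<in>M1. c1 m * mnm n m a)" using assms(1) unfolding is_poly_def' by blast
  obtain M2 c2 where 2: "finite M2" "\<forall>m\<in>M2. (\<forall>i. m i \<noteq> 0 \<longrightarrow> i \<in> {1..n}) \<and> (\<Sum>i=1..n. m i) \<le> D2"
     "\<forall>a. Q a = (\<Sum>m\<in>M2. c2 m * mnm n m a)" using assms(2) unfolding is_poly_def' by blast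
  define h where "h = (\<lambda>(m1::nat\<Rightarrow>nat, m2::nat\<Rightarrow>nat). (\<lambda>i. m1 i + m2 i))"
  define S where "S = M1 \<times> M2"
  define c where "c m = (\<Sum>x\<in>{x\<in>S. h x = m}. c1 (fst x) * c2 (snd x))" for m
  have fS: "finite S" using 1(1) 2(1) unfolding S_def by simp
  have "P a * Q a = (\<Sum>m\<in>h ` S. c m * mnm n m a)" for a
  proof -
    have "P a * Q a = (\<Sum>x\<in>S. c1 (fst x) * c2 (snd x) * mnm n (h x) a)"
      unfolding 1(3)[rule_format] 2(3)[rule_format] sum_product S_def sum.cartesian_product
      by (rule sum.cong) (auto simp: h_def mono_add)
    also have "\<dots> = (\<Sum>m\<in>h ` S. \<Sum>x\<in>{x\<in>S. h x = m}. c1 (fst x) * c2 (snd x) * mnm n (h x) a)"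
      by (rule sum.image_gen[OF fS])
    also have "\<dots> = (\<Sum>m\<in>h ` S. c m * mnm n m a)"
      unfolding c_def sum_distrib_right by (intro sum.cong refl) auto
    finally show ?thesis .
  qed
  moreover have "\<forall>m\<in>h ` S. (\<forall>i. m i \<noteq> 0 \<longrightarrow> i \<in> {1..n}) \<and> (\<Sum>i=1..n. m i) \<le> D1 + D2"
  proof
    fix m assume "m \<in> h ` S"
    then obtain m1 m2 where "m1 \<in> M1" "m2 \<in> M2" "m = (\<lambda>i. m1 i + m2 i)"
      unfolding S_def h_def by auto
    then show "(\<forall>i. m i \<noteq> 0 \<longrightarrow> i \<in> {1..n}) \<and> (\<Sum>i=1..n. m i) \<le> D1 + D2"
      using 1(2) 2(2) by (auto simp: sum.distrib add_mono)
  qed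
  ultimately show ?thesis unfolding is_poly_def' using fS
    by (intro exI[of _ "h ` S"] exI[of _ c]) auto
qed

lemma poly_scale: "is_poly_deg_le n D Q \<Longrightarrow> is_poly_deg_le n D (\<lambda>a. r * Q a)"
  using poly_mult[OF poly_const[of n 0 r]] by simp

lemma poly_sum:
  assumes "\<And>x. x \<in> A \<Longrightarrow> is_poly_deg_le n D (Q x)"
  shows "is_poly_deg_le n D (\<lambda>a. \<Sum>x\<in>A. Q x a)"
proof (cases "finite A")
  case True
  then show ?thesis using assms
  proof (induction A rule: finite_induct)
    case empty then show ?case by (simp add: poly_const)
  next
    case (insert x F)
    then show ?case using poly_add[of n D "Q x" "\<lambda>a. \<Sum>x\<in>F. Q x a"] by simp
  qed
next
  case False then show ?thesis by (simp add: poly_const)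
qed

lemma poly_prod:
  assumes "finite A" "\<And>x. x \<in> A \<Longrightarrow> is_poly_deg_le n (Dx x) (Q x)"
  shows "is_poly_deg_le n (\<Sum>x\<in>A. Dx x) (\<lambda>a. \<Prod>x\<in>A. Q x a)"
  using assms
proof (induction A rule: finite_induct)
  case empty then show ?case by (simp add: poly_const)
next
  case (insert x F)
  then show ?case using poly_mult[of n "Dx x" "Q x" "\<Sum>x\<in>F. Dx x" "\<lambda>a. \<Prod>x\<in>F. Q x a"] by simp
qed



lemma mono_upd0:
  assumes "i \<in> {1..n}"
  shows "mnm n m (a(i:=0)) = (if m i = 0 then mnm n m a else 0)"
proof (cases "m i = 0")
  case True
  then show ?thesis unfolding mnm_def by (auto intro!: prod.cong)
next
  case False
  have "(\<Prod>j=1..n. (a(i:=0)) j ^ m j) = 0"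
    using assms False by (intro prod_zero) (auto intro!: bexI[of _ i])
  then show ?thesis using False unfolding mnm_def by simp
qed

lemma filter_step:
  assumes fin: "finite M" and supp: "\<forall>m\<in>M. \<forall>i. m i \<noteq> 0 \<longrightarrow> i \<in> {1..n}"
    and rep: "\<forall>a. f a = (\<Sum>m\<in>M. c m * mnm n m a)" and i: "i \<in> {1..n}"
    and van: "\<forall>a. f (a(i:=0)) = 0"
  shows "\<forall>a. f a = (\<Sum>m\<in>{m\<in>M. 0 < m i}. c m * mnm n m a)"
proof
  fix a
  have "f a = f a - f (a(i:=0))" using van by simp
  also have "\<dots> = (\<Sum>m\<in>M. c m * mnm n m a - c m * mnm n m (a(i:=0)))"
    using rep by (simp add: sum_subtractf)
  also have "\<dots> = (\<Sum>m\<in>M. if 0 < m i then c m * mnm n m a else 0)"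
    by (rule sum.cong) (auto simp: mono_upd0[OF i])
  also have "\<dots> = (\<Sum>m\<in>{m\<in>M. 0 < m i}. c m * mnm n m a)"
    using fin by (simp add: sum.inter_filter)
  finally show "f a = (\<Sum>m\<in>{m\<in>M. 0 < m i}. c m * mnm n m a)" .
qed

lemma filter_all:
  assumes fin: "finite M" and supp: "\<forall>m\<in>M. \<forall>i. m i \<noteq> 0 \<longrightarrow> i \<in> {1..n}"
    and rep: "\<forall>a. f a = (\<Sum>m\<in>M. c m * mnm n m a)"
    and van: "\<forall>i\<in>{1..n}. \<forall>a. f (a(i:=0)) = 0"
    and K: "finite K" "K \<subseteq> {1..n}"
  shows "\<forall>a. f a = (\<Sum>m\<in>{m\<in>M. \<forall>i\<in>K. 0 < m i}. c m * mnm n m a)"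
  using K
proof (induction K rule: finite_induct)
  case empty
  then show ?case using rep by simp
next
  case (insert x F)
  then have IH: "\<forall>a. f a = (\<Sum>m\<in>{m\<in>M. \<forall>i\<in>F. 0 < m i}. c m * mnm n m a)" by simp
  have "\<forall>a. f a = (\<Sum>m\<in>{m\<in>{m\<in>M. \<forall>i\<in>F. 0 < m i}. 0 < m x}. c m * mnm n m a)"
  proof (rule filter_step[OF _ _ IH])
    show "finite {m \<in> M. \<forall>i\<in>F. 0 < m i}" using fin by simp
    show "\<forall>m\<in>{m \<in> M. \<forall>i\<in>F. 0 < m i}. \<forall>i. m i \<noteq> 0 \<longrightarrow> i \<in> {1..n}" using supp by blast
    show "x \<in> {1..n}" using insert.prems by simp
    then show "\<forall>a. f (a(x := 0)) = 0" using van by blast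
  qed
  moreover have "{m\<in>{m\<in>M. \<forall>i\<in>F. 0 < m i}. 0 < m x} = {m\<in>M. \<forall>i\<in>insert x F. 0 < m i}"
    by auto
  ultimately show ?case by simp
qed

lemma poly_divide:
  assumes "is_poly_deg_le n D f" and van: "\<And>i a. i \<in> {1..n} \<Longrightarrow> a i = 0 \<Longrightarrow> f a = 0"
  shows "\<exists>Q. is_poly_deg_le n (D - n) Q \<and> (\<forall>a. f a = (\<Prod>i=1..n. a i) * Q a)"
proof -
  obtain M c where M: "finite M" "\<forall>m\<in>M. (\<forall>i. m i \<noteq> 0 \<longrightarrow> i \<in> {1..n}) \<and> (\<Sum>i=1..n. m i) \<le> D"
     "\<forall>a. f a = (\<Sum>m\<in>M. c m * mnm n m a)" using assms(1) unfolding is_poly_def' by blast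
  have van': "\<forall>i\<in>{1..n}. \<forall>a. f (a(i:=0)) = 0" using van by simp
  define M' where "M' = {m\<in>M. \<forall>i\<in>{1..n}. 0 < m i}"
  have rep: "\<forall>a. f a = (\<Sum>m\<in>M'. c m * mnm n m a)"
    unfolding M'_def by (rule filter_all[OF M(1) _ M(3) van']) (use M(2) in auto)
  define sh where "sh m = (\<lambda>i. m i - (1::nat))" for m :: "nat \<Rightarrow> nat"
  define Q where "Q a = (\<Sum>m\<in>M'. c m * mnm n (sh m) a)" for a
  have fM': "finite M'" using M(1) unfolding M'_def by simp
  have key: "mnm n m a = (\<Prod>i=1..n. a i) * mnm n (sh m) a" if "m \<in> M'" for m a
  proof -
    have "mnm n m a = (\<Prod>i=1..n. a i * a i ^ sh m i)"
      unfolding mnm_def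
    proof (rule prod.cong[OF refl])
      fix i assume "i \<in> {1..n}"
      then have "m i = Suc (sh m i)" using that unfolding M'_def sh_def by auto
      then show "a i ^ m i = a i * a i ^ sh m i" by simp
    qed
    then show ?thesis unfolding mnm_def by (simp add: prod.distrib)
  qed
  have "f a = (\<Prod>i=1..n. a i) * Q a" for a
    unfolding rep[rule_format] Q_def sum_distrib_left
    by (rule sum.cong) (auto simp: key)
  moreover have "is_poly_deg_le n (D - n) Q"
    unfolding is_poly_def'
  proof (intro exI[of _ "sh ` M'"] exI[of _ "\<lambda>m'. \<Sum>m\<in>{m\<in>M'. sh m = m'}. c m"] conjI)
    show "finite (sh ` M')" using fM' by simp
    show "\<forall>m\<in>sh ` M'. (\<forall>i. m i \<noteq> 0 \<longrightarrow> i \<in> {1..n}) \<and> (\<Sum>i=1..n. m i) \<le> D - n"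
    proof
      fix m' assume "m' \<in> sh ` M'"
      then obtain m where m: "m \<in> M'" "m' = sh m" by auto
      then have mM: "m \<in> M" "\<forall>i\<in>{1..n}. 0 < m i" unfolding M'_def by auto
      have "(\<Sum>i=1..n. m i) = (\<Sum>i=1..n. sh m i + 1)"
        by (rule sum.cong) (use mM in \<open>auto simp: sh_def\<close>)
      also have "\<dots> = (\<Sum>i=1..n. sh m i) + (\<Sum>i=1..n. 1)" by (rule sum.distrib)
      also have "\<dots> = (\<Sum>i=1..n. sh m i) + n" by simp
      finally have "(\<Sum>i=1..n. sh m i) \<le> D - n" using M(2) mM(1) by force
      moreover have "\<forall>i. sh m i \<noteq> 0 \<longrightarrow> i \<in> {1..n}" using M(2) mM(1) unfolding sh_def
        by (metis zero_diff)
      ultimately show "(\<forall>i. m' i \<noteq> 0 \<longrightarrow> i \<in> {1..n}) \<and> (\<Sum>i=1..n. m' i) \<le> D - n"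
        using m by simp
    qed
    show "\<forall>a. Q a = (\<Sum>m'\<in>sh ` M'. (\<Sum>m\<in>{m\<in>M'. sh m = m'}. c m) * mnm n m' a)"
    proof
      fix a
      have "Q a = (\<Sum>m'\<in>sh ` M'. \<Sum>m\<in>{m\<in>M'. sh m = m'}. c m * mnm n (sh m) a)"
        unfolding Q_def by (rule sum.image_gen[OF fM'])
      also have "\<dots> = (\<Sum>m'\<in>sh ` M'. (\<Sum>m\<in>{m\<in>M'. sh m = m'}. c m) * mnm n m' a)"
        unfolding sum_distrib_right by (intro sum.cong refl) auto
      finally show "Q a = (\<Sum>m'\<in>sh ` M'. (\<Sum>m\<in>{m\<in>M'. sh m = m'}. c m) * mnm n m' a)" .
    qed
  qed
  ultimately show ?thesis by blast
qed



lemma poly_cong: "is_poly_deg_le n D P \<Longrightarrow> (\<And>a. P a = Q a) \<Longrightarrow> is_poly_deg_le n D Q"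
proof -
  assume "is_poly_deg_le n D P" "\<And>a. P a = Q a"
  then have "P = Q" by auto
  then show ?thesis using \<open>is_poly_deg_le n D P\<close> by simp
qed

definition fblk :: "(nat \<Rightarrow> rat) \<Rightarrow> nat set \<Rightarrow> nat \<Rightarrow> rat" where
  "fblk a I d = ((2 * (\<Sum>l\<in>I. a l) + 1) gchoose (2 * d)) *
      (\<Prod>i=1..card I - 1. (2 * of_nat d + 1 - 2 * of_nat i :: rat))"

lemma Pgn_alt: "Pgn g n a =
    (\<Sum>k=1..n. (-1) ^ k * fact (2 * g - 3 + k) / fact k *
       (\<Sum>Is\<in>ordered_set_partitions n k.
          \<Sum>ds\<in>compositions k (g - 2 + n). \<Prod>j<k. fblk a (Is ! j) (ds ! j)))"
  unfolding Pgn_def fblk_def by simp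

lemma poly_lin:
  assumes "I \<subseteq> {1..n}"
  shows "is_poly_deg_le n 1 (\<lambda>a. 2 * (\<Sum>l\<in>I. a l) + 1 - of_nat i)"
proof -
  have "is_poly_deg_le n 1 (\<lambda>a. (\<Sum>l\<in>I. 2 * a l) + (1 - of_nat i))"
    by (intro poly_add poly_sum poly_scale poly_const poly_var) (use assms in auto)
  then show ?thesis by (rule poly_cong) (simp add: sum_distrib_left)
qed

lemma poly_gchoose:
  assumes "I \<subseteq> {1..n}"
  shows "is_poly_deg_le n m (\<lambda>a. (2 * (\<Sum>l\<in>I. a l) + 1) gchoose m)"
proof -
  have "is_poly_deg_le n (\<Sum>i\<in>{0..<m}. 1) (\<lambda>a. \<Prod>i\<in>{0..<m}. 2 * (\<Sum>l\<in>I. a l) + 1 - of_nat i)"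
    by (rule poly_prod) (use poly_lin[OF assms] in auto)
  then have "is_poly_deg_le n m (\<lambda>a. (1 / fact m) * (\<Prod>i\<in>{0..<m}. 2 * (\<Sum>l\<in>I. a l) + 1 - of_nat i))"
    by (intro poly_scale) simp
  then show ?thesis
  proof (rule poly_cong)
    fix a
    show "1 / fact m * (\<Prod>i = 0..<m. 2 * (\<Sum>l\<in>I. a l) + 1 - of_nat i) =
      (2 * (\<Sum>l\<in>I. a l) + 1) gchoose m"
      using gbinomial_mult_fact'[of "2 * (\<Sum>l\<in>I. a l) + 1" m, symmetric]
      by (simp add: field_simps)
  qed
qed

lemma poly_fblk:
  assumes "I \<subseteq> {1..n}"
  shows "is_poly_deg_le n (2 * d) (\<lambda>a. fblk a I d)"
  unfolding fblk_def
  using poly_mult[OF poly_gchoose[OF assms, of "2*d"] poly_const[of n 0]] by simp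

lemma osp_blocks: "Is \<in> ordered_set_partitions n k \<Longrightarrow> j < k \<Longrightarrow> Is ! j \<subseteq> {1..n}"
  unfolding ordered_set_partitions_def by (auto simp: Union_upper)

lemma Pgn_poly: "is_poly_deg_le n (2 * (g - 2 + n)) (Pgn g n)"
proof -
  have "is_poly_deg_le n (2 * (g - 2 + n)) (\<lambda>a. \<Sum>k=1..n. (-1) ^ k * fact (2 * g - 3 + k) / fact k *
       (\<Sum>Is\<in>ordered_set_partitions n k.
          \<Sum>ds\<in>compositions k (g - 2 + n). \<Prod>j<k. fblk a (Is ! j) (ds ! j)))"
  proof (intro poly_sum poly_scale)
    fix k Is ds
    assume Is: "Is \<in> ordered_set_partitions n k" and ds: "ds \<in> compositions k (g - 2 + n)"
    have "is_poly_deg_le n (\<Sum>j<k. 2 * (ds ! j)) (\<lambda>a. \<Prod>j<k. fblk a (Is ! j) (ds ! j))"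
      by (rule poly_prod) (use poly_fblk[OF osp_blocks[OF Is]] in auto)
    moreover have "(\<Sum>j<k. 2 * (ds ! j)) = 2 * (g - 2 + n)"
      using ds unfolding compositions_def
      by (auto simp: sum_distrib_left[symmetric] sum_list_sum_nth atLeast0LessThan)
    ultimately show "is_poly_deg_le n (2 * (g - 2 + n)) (\<lambda>a. \<Prod>j<k. fblk a (Is ! j) (ds ! j))"
      by simp
  qed
  then show ?thesis by (rule poly_cong) (simp add: Pgn_alt)
qed



definition osp :: "nat set \<Rightarrow> nat \<Rightarrow> nat set list set" where
  "osp U k = {Is. length Is = k \<and> (\<forall>I\<in>set Is. I \<noteq> {}) \<and>
          (\<forall>i<k. \<forall>j<k. i \<noteq> j \<longrightarrow> Is ! i \<inter> Is ! j = {}) \<and> \<Union>(set Is) = U}"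

lemma osp_nat: "ordered_set_partitions n k = osp {1..n} k"
  unfolding ordered_set_partitions_def osp_def by simp

lemma osp_alt: "Is \<in> osp U k \<longleftrightarrow> length Is = k \<and> {} \<notin> set Is \<and> distinct Is \<and>
    (\<forall>I\<in>set Is. \<forall>J\<in>set Is. I \<noteq> J \<longrightarrow> I \<inter> J = {}) \<and> \<Union>(set Is) = U"
proof
  assume H: "Is \<in> osp U k"
  then have ne: "\<forall>I\<in>set Is. I \<noteq> {}" and dj: "\<forall>i<k. \<forall>j<k. i \<noteq> j \<longrightarrow> Is ! i \<inter> Is ! j = {}"
    and len: "length Is = k" unfolding osp_def by auto
  have "distinct Is"
    unfolding distinct_conv_nth
  proof (intro allI impI)
    fix i j assume "i < length Is" "j < length Is" "i \<noteq> j"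
    then show "Is ! i \<noteq> Is ! j" using dj ne len by (metis Int_absorb nth_mem)
  qed
  moreover have "\<forall>I\<in>set Is. \<forall>J\<in>set Is. I \<noteq> J \<longrightarrow> I \<inter> J = {}"
    using dj len by (metis in_set_conv_nth)
  ultimately show "length Is = k \<and> {} \<notin> set Is \<and> distinct Is \<and>
    (\<forall>I\<in>set Is. \<forall>J\<in>set Is. I \<noteq> J \<longrightarrow> I \<inter> J = {}) \<and> \<Union>(set Is) = U"
    using H unfolding osp_def by auto
next
  assume H: "length Is = k \<and> {} \<notin> set Is \<and> distinct Is \<and>
    (\<forall>I\<in>set Is. \<forall>J\<in>set Is. I \<noteq> J \<longrightarrow> I \<inter> J = {}) \<and> \<Union>(set Is) = U"
  then have "\<forall>i<k. \<forall>j<k. i \<noteq> j \<longrightarrow> Is ! i \<inter> Is ! j = {}"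
    by (metis nth_eq_iff_index_eq nth_mem)
  then show "Is \<in> osp U k" using H unfolding osp_def by auto
qed

lemma osp_block_sub: "Is \<in> osp U k \<Longrightarrow> I \<in> set Is \<Longrightarrow> I \<subseteq> U"
  unfolding osp_def by auto

lemma finite_osp: "finite U \<Longrightarrow> finite (osp U k)"
  by (rule finite_subset[of _ "{Is. set Is \<subseteq> Pow U \<and> length Is = k}"])
     (auto simp: osp_def intro: finite_lists_length_eq)

lemma finite_comp: "finite (compositions k S)"
  by (rule finite_subset[of _ "{ds. set ds \<subseteq> {..S} \<and> length ds = k}"])
     (auto simp: compositions_def member_le_sum_list intro: finite_lists_length_eq)

lemma osp_sum_card:
  assumes "Is \<in> osp U k" "finite U"
  shows "(\<Sum>j<k. card (Is ! j)) = card U"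
proof -
  have len: "length Is = k" using assms unfolding osp_def by simp
  have "U = (\<Union>j\<in>{..<k}. Is ! j)" using assms len unfolding osp_def
    by (auto simp: set_conv_nth)
  moreover have "card (\<Union>j\<in>{..<k}. Is ! j) = (\<Sum>j<k. card (Is ! j))"
  proof (rule card_UN_disjoint)
    show "finite {..<k}" by simp
    show "\<forall>i\<in>{..<k}. finite (Is ! i)"
      using assms len osp_block_sub[OF assms(1)] by (meson finite_subset lessThan_iff nth_mem)
    show "\<forall>i\<in>{..<k}. \<forall>j\<in>{..<k}. i \<noteq> j \<longrightarrow> Is ! i \<inter> Is ! j = {}"
      using assms(1) unfolding osp_def by auto
  qed
  ultimately show ?thesis by simp
qed

lemma osp_le_card:
  assumes "Is \<in> osp U k" "finite U"
  shows "k \<le> card U"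
proof -
  have len: "length Is = k" using assms unfolding osp_def by simp
  have "(\<Sum>j<k. (1::nat)) \<le> (\<Sum>j<k. card (Is ! j))"
  proof (rule sum_mono)
    fix j assume "j \<in> {..<k}"
    then have "Is ! j \<in> set Is" using len by simp
    then have "Is ! j \<noteq> {}" "finite (Is ! j)" using assms osp_block_sub[OF assms(1)]
      unfolding osp_def by (auto dest: finite_subset)
    then show "1 \<le> card (Is ! j)" by (simp add: Suc_le_eq card_gt_0_iff)
  qed
  then show ?thesis using osp_sum_card[OF assms] by simp
qed

lemma distinct_ins: "distinct (ys @ x # zs) \<longleftrightarrow> distinct (ys @ zs) \<and> x \<notin> set (ys @ zs)"
  by auto

lemma set_ins: "set (take t xs @ x # drop t xs) = insert x (set xs)"
proof -
  have "set (take t xs @ x # drop t xs) = insert x (set (take t xs) \<union> set (drop t xs))" by simp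
  also have "set (take t xs) \<union> set (drop t xs) = set xs" by (metis set_append append_take_drop_id)
  finally show ?thesis .
qed



definition ins :: "nat \<Rightarrow> 'a \<Rightarrow> 'a list \<Rightarrow> 'a list" where
  "ins t x xs = take t xs @ x # drop t xs"

lemma bij_A:
  assumes "p \<notin> U" "k \<ge> 1"
  shows "bij_betw (\<lambda>(Js, t). ins t {p} Js) (osp U (k - 1) \<times> {..<k})
           {Is \<in> osp (insert p U) k. {p} \<in> set Is}"
  unfolding bij_betw_def
proof (intro conjI)
  have nop: "{p} \<notin> set Js" if "Js \<in> osp U k'" for Js k'
    using osp_block_sub[OF that] assms(1) by auto
  show "inj_on (\<lambda>(Js, t). ins t {p} Js) (osp U (k - 1) \<times> {..<k})"
  proof (rule inj_onI, clarify)
    fix Js t Js' t'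
    assume J: "Js \<in> osp U (k - 1)" "t < k" "Js' \<in> osp U (k - 1)" "t' < k"
      and eq: "ins t {p} Js = ins t' {p} Js'"
    have l: "length Js = k - 1" "length Js' = k - 1" using J unfolding osp_def by auto
    have "{p} \<notin> set (take t Js)" "{p} \<notin> set (drop t Js)"
      using nop[OF J(1)] by (auto dest: in_set_takeD in_set_dropD)
    then have "take t Js = take t' Js' \<and> drop t Js = drop t' Js'"
      using eq unfolding ins_def by (simp add: append_Cons_eq_iff)
    moreover have "t = length (take t Js)" "t' = length (take t' Js')" using l J by auto
    ultimately show "Js = Js' \<and> t = t'" by (metis append_take_drop_id)
  qed
  show "(\<lambda>(Js, t). ins t {p} Js) ` (osp U (k - 1) \<times> {..<k}) =
        {Is \<in> osp (insert p U) k. {p} \<in> set Is}"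
  proof
    show "(\<lambda>(Js, t). ins t {p} Js) ` (osp U (k - 1) \<times> {..<k}) \<subseteq>
        {Is \<in> osp (insert p U) k. {p} \<in> set Is}"
    proof clarify
      fix Js t assume J: "Js \<in> osp U (k - 1)" "t < k"
      have l: "length Js = k - 1" using J unfolding osp_def by auto
      have sub: "\<forall>I\<in>set Js. I \<subseteq> U" using osp_block_sub[OF J(1)] by blast
      have "ins t {p} Js \<in> osp (insert p U) k"
        unfolding osp_alt
      proof (intro conjI)
        show "length (ins t {p} Js) = k" using l J(2) unfolding ins_def by simp
        show "{} \<notin> set (ins t {p} Js)" using J(1) unfolding ins_def set_ins osp_alt by auto
        have "distinct (take t Js @ drop t Js)" "{p} \<notin> set (take t Js @ drop t Js)"
          using J(1) nop[OF J(1)] unfolding osp_alt by auto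
        then show "distinct (ins t {p} Js)" unfolding ins_def distinct_ins by blast
        show "\<forall>I\<in>set (ins t {p} Js). \<forall>J\<in>set (ins t {p} Js). I \<noteq> J \<longrightarrow> I \<inter> J = {}"
          unfolding ins_def set_ins
        proof (intro ballI impI)
          have dj: "\<forall>I\<in>set Js. \<forall>J\<in>set Js. I \<noteq> J \<longrightarrow> I \<inter> J = {}"
            using J(1) unfolding osp_alt by blast
          fix I J assume "I \<in> insert {p} (set Js)" "J \<in> insert {p} (set Js)" "I \<noteq> J"
          then show "I \<inter> J = {}" using dj sub assms(1) by auto
        qed
        show "\<Union>(set (ins t {p} Js)) = insert p U"
          unfolding ins_def set_ins using J(1) unfolding osp_alt by auto
      qed
      moreover have "{p} \<in> set (ins t {p} Js)" unfolding ins_def set_ins by simp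
      ultimately show "ins t {p} Js \<in> osp (insert p U) k \<and> {p} \<in> set (ins t {p} Js)" by simp
    qed
    show "{Is \<in> osp (insert p U) k. {p} \<in> set Is} \<subseteq>
       (\<lambda>(Js, t). ins t {p} Js) ` (osp U (k - 1) \<times> {..<k})"
    proof clarify
      fix Is assume I: "Is \<in> osp (insert p U) k" "{p} \<in> set Is"
      obtain xs ys where xy: "Is = xs @ {p} # ys" using I(2) by (meson split_list)
      have A: "length Is = k" "{} \<notin> set Is" "distinct Is"
        "\<forall>I\<in>set Is. \<forall>J\<in>set Is. I \<noteq> J \<longrightarrow> I \<inter> J = {}" "\<Union>(set Is) = insert p U"
        using I(1) unfolding osp_alt by auto
      have dxy: "distinct (xs @ ys)" "{p} \<notin> set (xs @ ys)" using A(3) xy by auto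
      have pn: "p \<notin> J" if "J \<in> set (xs @ ys)" for J
      proof -
        have "J \<in> set Is" "{p} \<in> set Is" using xy that by auto
        moreover have "J \<noteq> {p}" using dxy(2) that by auto
        ultimately have "J \<inter> {p} = {}" by (rule A(4)[rule_format])
        then show ?thesis by blast
      qed
      have "xs @ ys \<in> osp U (k - 1)"
        unfolding osp_alt
      proof (intro conjI)
        show "length (xs @ ys) = k - 1" using A(1) xy by simp
        show "{} \<notin> set (xs @ ys)" using A(2) xy by auto
        show "distinct (xs @ ys)" by (rule dxy(1))
        show "\<forall>I\<in>set (xs @ ys). \<forall>J\<in>set (xs @ ys). I \<noteq> J \<longrightarrow> I \<inter> J = {}" using A(4) xy by auto
        show "\<Union>(set (xs @ ys)) = U"
        proof -
          have e: "insert p (\<Union>(set (xs @ ys))) = insert p U" using A(5) xy by auto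
          have pnot: "p \<notin> \<Union>(set (xs @ ys))" using pn by blast
          show ?thesis using insert_ident[OF pnot assms(1)] e by simp
        qed
      qed
      moreover have "length xs < k" using A(1) xy by simp
      moreover have "Is = ins (length xs) {p} (xs @ ys)" unfolding ins_def xy by simp
      ultimately show "Is \<in> (\<lambda>(Js, t). ins t {p} Js) ` (osp U (k - 1) \<times> {..<k})"
        by (intro image_eqI[of _ _ "(xs @ ys, length xs)"]) auto
    qed
  qed
qed



lemma osp_notin: "Js \<in> osp U k \<Longrightarrow> p \<notin> U \<Longrightarrow> I \<in> set Js \<Longrightarrow> p \<notin> I"
  using osp_block_sub by blast

lemma bij_B:
  assumes "p \<notin> U"
  shows "bij_betw (\<lambda>(Js, j). Js[j := insert p (Js ! j)]) (osp U k \<times> {..<k})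
           {Is \<in> osp (insert p U) k. {p} \<notin> set Is}"
  unfolding bij_betw_def
proof (intro conjI)
  have rm: "map (\<lambda>I. I - {p}) (Js[j := insert p (Js ! j)]) = Js" if J: "Js \<in> osp U k" "j < k" for Js j
  proof -
    have pJ: "\<forall>I\<in>set Js. p \<notin> I" using osp_notin[OF J(1) assms] by blast
    have l: "length Js = k" using J unfolding osp_def by simp
    have "map (\<lambda>I. I - {p}) Js = Js" by (rule map_idI) (use pJ in auto)
    moreover have "insert p (Js ! j) - {p} = Js ! j" using pJ J(2) l by auto
    ultimately show ?thesis by (simp add: map_update)
  qed
  show "inj_on (\<lambda>(Js, j). Js[j := insert p (Js ! j)]) (osp U k \<times> {..<k})"
  proof (rule inj_onI, clarify)
    fix Js j Js' j'
    assume J: "Js \<in> osp U k" "j < k" "Js' \<in> osp U k" "j' < k"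
      and eq: "Js[j := insert p (Js ! j)] = Js'[j' := insert p (Js' ! j')]"
    have "Js = Js'" using rm[OF J(1,2)] rm[OF J(3,4)] eq by metis
    moreover have "j = j'"
    proof (rule ccontr)
      assume ne: "j \<noteq> j'"
      have l: "length Js = k" "length Js' = k" using J unfolding osp_def by auto
      have "Js[j := insert p (Js ! j)] ! j = insert p (Js ! j)" using l J(2) by simp
      moreover have "Js'[j' := insert p (Js' ! j')] ! j = Js' ! j" using ne by simp
      ultimately have "p \<in> Js ! j" using eq \<open>Js = Js'\<close> by auto
      moreover have "p \<notin> Js ! j" using osp_notin[OF J(1) assms] l J(2) by simp
      ultimately show False by simp
    qed
    ultimately show "Js = Js' \<and> j = j'" by simp
  qed
  show "(\<lambda>(Js, j). Js[j := insert p (Js ! j)]) ` (osp U k \<times> {..<k}) =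
        {Is \<in> osp (insert p U) k. {p} \<notin> set Is}"
  proof
    show "(\<lambda>(Js, j). Js[j := insert p (Js ! j)]) ` (osp U k \<times> {..<k}) \<subseteq>
        {Is \<in> osp (insert p U) k. {p} \<notin> set Is}"
    proof clarify
      fix Js j assume J: "Js \<in> osp U k" "j < k"
      have A: "length Js = k" "{} \<notin> set Js" "distinct Js"
        "\<forall>I\<in>set Js. \<forall>J\<in>set Js. I \<noteq> J \<longrightarrow> I \<inter> J = {}" "\<Union>(set Js) = U"
        using J(1) unfolding osp_alt by auto
      have pJ: "\<And>I. I \<in> set Js \<Longrightarrow> p \<notin> I" using osp_notin[OF J(1) assms] by blast
      define J0 where "J0 = Js ! j"
      have J0: "J0 \<in> set Js" unfolding J0_def using A(1) J(2) by simp
      have J0ne: "J0 \<noteq> {}" using J0 A(2) by metis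
      have pJ0: "p \<notin> J0" using pJ[OF J0] .
      have st: "set (Js[j := insert p J0]) = insert (insert p J0) (set Js - {J0})"
        unfolding J0_def using set_update_distinct[OF A(3)] A(1) J(2) by simp
      have notin: "insert p J0 \<notin> set Js" using pJ by blast
      have "Js[j := insert p J0] \<in> osp (insert p U) k"
        unfolding osp_alt
      proof (intro conjI)
        show "length (Js[j := insert p J0]) = k" using A(1) by simp
        show "{} \<notin> set (Js[j := insert p J0])" unfolding st using A(2) by auto
        show "distinct (Js[j := insert p J0])"
          by (rule distinct_list_update[OF A(3)]) (use notin in blast)
        show "\<forall>I\<in>set (Js[j := insert p J0]). \<forall>J\<in>set (Js[j := insert p J0]). I \<noteq> J \<longrightarrow> I \<inter> J = {}"
          unfolding st
        proof (intro ballI impI)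
          fix I I' assume I: "I \<in> insert (insert p J0) (set Js - {J0})"
            and I': "I' \<in> insert (insert p J0) (set Js - {J0})" and ne: "I \<noteq> I'"
          show "I \<inter> I' = {}"
          proof (cases "I = insert p J0")
            case True
            then have "I' \<in> set Js" "I' \<noteq> J0" using I' ne by auto
            then have "J0 \<inter> I' = {}" "p \<notin> I'" using A(4) J0 pJ by auto
            then show ?thesis using True by auto
          next
            case False
            then have II: "I \<in> set Js" "I \<noteq> J0" using I by auto
            show ?thesis
            proof (cases "I' = insert p J0")
              case True
              then have "J0 \<inter> I = {}" "p \<notin> I" using A(4) J0 pJ II by auto
              then show ?thesis using True by auto
            next
              case False
              then have "I' \<in> set Js" using I' by auto
              then show ?thesis using A(4) II ne by auto
            qed
          qed
        qed
        show "\<Union>(set (Js[j := insert p J0])) = insert p U"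
          unfolding st using A(5) J0 by auto
      qed
      moreover have "{p} \<notin> set (Js[j := insert p J0])"
      proof
        assume "{p} \<in> set (Js[j := insert p J0])"
        then have "{p} = insert p J0 \<or> {p} \<in> set Js" unfolding st by auto
        then show False
        proof
          assume "{p} = insert p J0"
          then have "J0 \<subseteq> {p}" by auto
          then show False using J0ne pJ0 by auto
        next
          assume "{p} \<in> set Js"
          then show False using pJ by auto
        qed
      qed
      ultimately show "Js[j := insert p (Js ! j)] \<in> osp (insert p U) k \<and>
          {p} \<notin> set (Js[j := insert p (Js ! j)])" unfolding J0_def by simp
    qed
    show "{Is \<in> osp (insert p U) k. {p} \<notin> set Is} \<subseteq>
       (\<lambda>(Js, j). Js[j := insert p (Js ! j)]) ` (osp U k \<times> {..<k})"
    proof clarify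
      fix Is assume I: "Is \<in> osp (insert p U) k" "{p} \<notin> set Is"
      have l: "length Is = k" and ne: "\<forall>I\<in>set Is. I \<noteq> {}"
        and dj: "\<forall>i<k. \<forall>j<k. i \<noteq> j \<longrightarrow> Is ! i \<inter> Is ! j = {}"
        and un: "\<Union>(set Is) = insert p U" using I(1) unfolding osp_def by auto
      have "p \<in> \<Union>(set Is)" using un by simp
      then obtain j where j: "j < k" "p \<in> Is ! j" using l by (auto simp: in_set_conv_nth)
      define Js where "Js = map (\<lambda>I. I - {p}) Is"
      have "Js \<in> osp U k"
        unfolding osp_def
      proof (intro CollectI conjI)
        show "length Js = k" unfolding Js_def using l by simp
        show "\<forall>I\<in>set Js. I \<noteq> {}"
        proof
          fix I assume "I \<in> set Js"
          then obtain I0 where I0: "I0 \<in> set Is" "I = I0 - {p}" unfolding Js_def by auto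
          have "I0 \<noteq> {}" "I0 \<noteq> {p}" using I0 ne I(2) by auto
          then show "I \<noteq> {}" using I0(2) by blast
        qed
        show "\<forall>i<k. \<forall>j<k. i \<noteq> j \<longrightarrow> Js ! i \<inter> Js ! j = {}"
          unfolding Js_def using dj l by auto
        show "\<Union>(set Js) = U"
        proof -
          have "\<Union>(set Js) = \<Union>(set Is) - {p}" unfolding Js_def by auto
          then show ?thesis using un assms by auto
        qed
      qed
      moreover have "Is = Js[j := insert p (Js ! j)]"
      proof (rule nth_equalityI)
        show "length Is = length (Js[j := insert p (Js ! j)])" unfolding Js_def by simp
        fix i assume i: "i < length Is"
        show "Is ! i = Js[j := insert p (Js ! j)] ! i"
        proof (cases "i = j")
          case True
          then show ?thesis unfolding Js_def using j l by auto
        next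
          case False
          then have "Is ! i \<inter> Is ! j = {}" using dj i j l by auto
          then have "p \<notin> Is ! i" using j by auto
          then show ?thesis unfolding Js_def using False i by auto
        qed
      qed
      ultimately show "Is \<in> (\<lambda>(Js, j). Js[j := insert p (Js ! j)]) ` (osp U k \<times> {..<k})"
        using j by (intro image_eqI[of _ _ "(Js, j)"]) auto
    qed
  qed
qed



definition W :: "(nat \<Rightarrow> rat) \<Rightarrow> nat \<Rightarrow> nat set list \<Rightarrow> nat \<Rightarrow> rat" where
  "W a k Is S = (\<Sum>ds\<in>compositions k S. \<Prod>j<k. fblk a (Is ! j) (ds ! j))"

lemma prod_map2: "length xs = length ys \<Longrightarrow>
    (\<Prod>j<length xs. F (xs ! j) (ys ! j)) = prod_list (map2 F xs ys)"
proof (induction xs arbitrary: ys)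
  case Nil then show ?case by simp
next
  case (Cons x xs)
  then obtain y ys' where "ys = y # ys'" by (cases ys) auto
  then show ?case using Cons by (simp del: prod.lessThan_Suc add: prod.lessThan_Suc_shift)
qed

lemma prod_map2_ins:
  fixes F :: "'a \<Rightarrow> 'b \<Rightarrow> 'c::comm_monoid_mult"
  shows "length xs = length us \<Longrightarrow>
   prod_list (map2 F (xs @ x # ys) (us @ u # vs)) = F x u * prod_list (map2 F (xs @ ys) (us @ vs))"
  by (simp add: ac_simps)

lemma fblk_single: "a p = 0 \<Longrightarrow> fblk a {p} d = (if d = 0 then 1 else 0)"
proof -
  assume ap: "a p = 0"
  have "((1::rat) gchoose (2 * d)) = of_nat (1 choose (2 * d))"
    using binomial_gbinomial[of 1 "2*d", where 'a=rat] by simp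
  also have "\<dots> = (if d = 0 then 1 else 0)" by (cases d) auto
  finally show ?thesis unfolding fblk_def using ap by simp
qed

lemma fblk_insert:
  assumes "p \<notin> J" "finite J" "J \<noteq> {}" "a p = 0"
  shows "fblk a (insert p J) d = fblk a J d * (2 * of_nat d + 1 - 2 * of_nat (card J))"
proof -
  obtain m where m: "card J = Suc m" using assms by (cases "card J") auto
  have "(\<Prod>i=1..card (insert p J) - 1. (2 * of_nat d + 1 - 2 * of_nat i :: rat)) =
     (\<Prod>i=1..Suc m. (2 * of_nat d + 1 - 2 * of_nat i :: rat))" using assms m by simp
  also have "\<dots> = (\<Prod>i=1..m. (2 * of_nat d + 1 - 2 * of_nat i :: rat)) * (2 * of_nat d + 1 - 2 * of_nat (Suc m))"
    by simp
  finally show ?thesis unfolding fblk_def using assms m by simp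
qed

lemma ins_comp: "ds' \<in> compositions (k - 1) S \<Longrightarrow> t < k \<Longrightarrow> ins t 0 ds' \<in> compositions k S"
proof -
  assume d: "ds' \<in> compositions (k - 1) S" and t: "t < k"
  have "sum_list (ins t 0 ds') = sum_list (take t ds') + sum_list (drop t ds')" unfolding ins_def by simp
  also have "\<dots> = sum_list ds'" by (metis append_take_drop_id sum_list_append)
  finally show ?thesis using d t unfolding compositions_def ins_def by auto
qed

lemma W_A:
  assumes l: "length Js = k - 1" and t: "t < k" and ap: "a p = 0"
  shows "W a k (ins t {p} Js) S = W a (k - 1) Js S"
proof -
  define Is where "Is = ins t {p} Js"
  have lI: "length Is = k" unfolding Is_def ins_def using l t by auto
  have It: "Is ! t = {p}" unfolding Is_def ins_def using l t by (simp add: nth_append)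
  define G where "G ds = (\<Prod>j<k. fblk a (Is ! j) (ds ! j))" for ds
  have "W a k Is S = (\<Sum>ds\<in>compositions k S. G ds)" unfolding W_def G_def by simp
  also have "\<dots> = (\<Sum>ds\<in>ins t 0 ` compositions (k - 1) S. G ds)"
  proof (rule sum.mono_neutral_right[OF finite_comp])
    show "ins t 0 ` compositions (k - 1) S \<subseteq> compositions k S" using ins_comp t by blast
    show "\<forall>ds\<in>compositions k S - ins t 0 ` compositions (k - 1) S. G ds = 0"
    proof
      fix ds assume ds: "ds \<in> compositions k S - ins t 0 ` compositions (k - 1) S"
      have lds: "length ds = k" "sum_list ds = S" using ds unfolding compositions_def by auto
      have "ds ! t \<noteq> 0"
      proof
        assume z: "ds ! t = 0"
        define ds' where "ds' = take t ds @ drop (Suc t) ds"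
        have dec: "ds = take t ds @ ds ! t # drop (Suc t) ds" using lds t by (simp add: id_take_nth_drop)
        have "sum_list ds' = S" using lds(2) dec z unfolding ds'_def
          by (metis add_0 sum_list_append sum_list.Cons)
        moreover have "length ds' = k - 1" unfolding ds'_def using lds t by simp
        ultimately have "ds' \<in> compositions (k - 1) S" unfolding compositions_def by simp
        moreover have "ins t 0 ds' = ds" unfolding ins_def ds'_def using lds t dec z
          by (simp add: min_def)
        ultimately show False using ds by blast
      qed
      then have "fblk a (Is ! t) (ds ! t) = 0" using It fblk_single[of a p, OF ap] by simp
      then show "G ds = 0" unfolding G_def using t by (intro prod_zero) auto
    qed
  qed
  also have "\<dots> = (\<Sum>ds'\<in>compositions (k - 1) S. G (ins t 0 ds'))"
  proof (rule sum.reindex_cong[OF _ refl refl])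
    show "inj_on (ins t 0) (compositions (k - 1) S)"
    proof (rule inj_onI)
      fix x y assume x: "x \<in> compositions (k - 1) S" and y: "y \<in> compositions (k - 1) S"
        and eq: "ins t 0 x = ins t 0 y"
      have lx: "length x = k - 1" "length y = k - 1" using x y unfolding compositions_def by auto
      then have "length (take t x) = length (take t y)" by simp
      moreover have "take t x @ (0 # drop t x) = take t y @ (0 # drop t y)"
        using eq unfolding ins_def .
      ultimately have "take t x = take t y \<and> 0 # drop t x = 0 # drop t y"
        by (metis append_eq_append_conv)
      then show "x = y" by (metis append_take_drop_id list.inject)
    qed
  qed
  also have "\<dots> = (\<Sum>ds'\<in>compositions (k - 1) S. \<Prod>j<k - 1. fblk a (Js ! j) (ds' ! j))"
  proof (rule sum.cong[OF refl])
    fix ds' assume ds': "ds' \<in> compositions (k - 1) S"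
    have ld: "length ds' = k - 1" using ds' unfolding compositions_def by simp
    have "G (ins t 0 ds') = prod_list (map2 (fblk a) Is (ins t 0 ds'))"
      unfolding G_def using prod_map2[of Is "ins t 0 ds'" "fblk a"] lI ld t
      by (simp add: ins_def)
    also have "\<dots> = fblk a {p} 0 * prod_list (map2 (fblk a) (take t Js @ drop t Js) (take t ds' @ drop t ds'))"
      unfolding Is_def ins_def using l ld t by (intro prod_map2_ins) simp
    also have "\<dots> = prod_list (map2 (fblk a) Js ds')" using fblk_single[of a p, OF ap] by simp
    also have "\<dots> = (\<Prod>j<k - 1. fblk a (Js ! j) (ds' ! j))"
      using prod_map2[of Js ds' "fblk a"] l ld by simp
    finally show "G (ins t 0 ds') = (\<Prod>j<k - 1. fblk a (Js ! j) (ds' ! j))" .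
  qed
  also have "\<dots> = W a (k - 1) Js S" unfolding W_def by simp
  finally show ?thesis unfolding Is_def .
qed

lemma W_B:
  assumes J: "Js \<in> osp U k" and fU: "finite U" and pU: "p \<notin> U" and ap: "a p = 0"
  shows "(\<Sum>j<k. W a k (Js[j := insert p (Js ! j)]) S) =
     (2 * of_nat S + of_nat k - 2 * of_nat (card U)) * W a k Js S"
proof -
  have l: "length Js = k" using J unfolding osp_def by simp
  define P where "P ds = (\<Prod>i<k. fblk a (Js ! i) (ds ! i))" for ds
  define fac where "fac j ds = (2 * of_nat (ds ! j) + 1 - 2 * of_nat (card (Js ! j)) :: rat)" for j ds
  have blk: "Js ! j \<in> set Js" if "j < k" for j using l that by simp
  have key: "(\<Prod>i<k. fblk a (Js[j := insert p (Js ! j)] ! i) (ds ! i)) = P ds * fac j ds"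
    if j: "j < k" for j ds
  proof -
    have Jj: "p \<notin> Js ! j" "finite (Js ! j)" "Js ! j \<noteq> {}"
      using osp_notin[OF J pU blk[OF j]] osp_block_sub[OF J blk[OF j]] fU J blk[OF j]
      unfolding osp_def by (auto intro: finite_subset)
    have "(\<Prod>i<k. fblk a (Js[j := insert p (Js ! j)] ! i) (ds ! i)) =
       fblk a (Js[j := insert p (Js ! j)] ! j) (ds ! j) *
       (\<Prod>i\<in>{..<k} - {j}. fblk a (Js[j := insert p (Js ! j)] ! i) (ds ! i))"
      using j by (intro prod.remove) auto
    also have "\<dots> = fblk a (insert p (Js ! j)) (ds ! j) * (\<Prod>i\<in>{..<k} - {j}. fblk a (Js ! i) (ds ! i))"
      using j l by (auto intro!: prod.cong)
    also have "\<dots> = fblk a (Js ! j) (ds ! j) * (\<Prod>i\<in>{..<k} - {j}. fblk a (Js ! i) (ds ! i)) * fac j ds"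
      unfolding fac_def fblk_insert[of p "Js ! j" a, OF Jj ap] by simp
    also have "fblk a (Js ! j) (ds ! j) * (\<Prod>i\<in>{..<k} - {j}. fblk a (Js ! i) (ds ! i)) = P ds"
      unfolding P_def using j by (intro prod.remove[symmetric]) auto
    finally show ?thesis .
  qed
  have sfac: "(\<Sum>j<k. fac j ds) = 2 * of_nat S + of_nat k - 2 * of_nat (card U)"
    if ds: "ds \<in> compositions k S" for ds
  proof -
    have lds: "length ds = k" "sum_list ds = S" using ds unfolding compositions_def by auto
    have s1: "(\<Sum>j<k. ds ! j) = S" using lds by (simp add: sum_list_sum_nth atLeast0LessThan)
    have s2: "(\<Sum>j<k. card (Js ! j)) = card U" by (rule osp_sum_card[OF J fU])
    have "(\<Sum>j<k. fac j ds) = 2 * of_nat (\<Sum>j<k. ds ! j) + of_nat k - 2 * of_nat (\<Sum>j<k. card (Js ! j))"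
      unfolding fac_def of_nat_sum by (simp add: sum.distrib sum_subtractf sum_distrib_left)
    then show ?thesis using s1 s2 by simp
  qed
  have "(\<Sum>j<k. W a k (Js[j := insert p (Js ! j)]) S) =
      (\<Sum>j<k. \<Sum>ds\<in>compositions k S. P ds * fac j ds)"
    unfolding W_def by (intro sum.cong refl) (simp add: key)
  also have "\<dots> = (\<Sum>ds\<in>compositions k S. P ds * (\<Sum>j<k. fac j ds))"
    by (subst sum.swap) (simp add: sum_distrib_left)
  also have "\<dots> = (\<Sum>ds\<in>compositions k S. P ds * (2 * of_nat S + of_nat k - 2 * of_nat (card U)))"
    by (intro sum.cong refl) (simp add: sfac)
  also have "\<dots> = (2 * of_nat S + of_nat k - 2 * of_nat (card U)) * W a k Js S"
    unfolding W_def P_def by (simp add: sum_distrib_left mult.commute)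
  finally show ?thesis .
qed



lemma step_k:
  assumes fU: "finite U" and pU: "p \<notin> U" and k: "k \<ge> 1" and ap: "a p = 0"
  shows "(\<Sum>Is\<in>osp (insert p U) k. W a k Is S) =
    of_nat k * (\<Sum>Js\<in>osp U (k - 1). W a (k - 1) Js S) +
    (2 * of_nat S + of_nat k - 2 * of_nat (card U)) * (\<Sum>Js\<in>osp U k. W a k Js S)"
proof -
  define SA where "SA = {Is \<in> osp (insert p U) k. {p} \<in> set Is}"
  define SB where "SB = {Is \<in> osp (insert p U) k. {p} \<notin> set Is}"
  have fin: "finite (osp (insert p U) k)" using fU by (simp add: finite_osp)
  have un: "osp (insert p U) k = SA \<union> SB" unfolding SA_def SB_def by auto
  have "(\<Sum>Is\<in>osp (insert p U) k. W a k Is S) = (\<Sum>Is\<in>SA. W a k Is S) + (\<Sum>Is\<in>SB. W a k Is S)"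
    unfolding un by (rule sum.union_disjoint) (use fin in \<open>auto simp: SA_def SB_def\<close>)
  moreover have "(\<Sum>Is\<in>SA. W a k Is S) = of_nat k * (\<Sum>Js\<in>osp U (k - 1). W a (k - 1) Js S)"
  proof -
    have "(\<Sum>Is\<in>SA. W a k Is S) = (\<Sum>x\<in>osp U (k - 1) \<times> {..<k}. W a k ((\<lambda>(Js, t). ins t {p} Js) x) S)"
      unfolding SA_def by (rule sum.reindex_bij_betw[OF bij_A[OF pU k], symmetric])
    also have "\<dots> = (\<Sum>Js\<in>osp U (k - 1). \<Sum>t<k. W a k (ins t {p} Js) S)"
      by (simp add: sum.cartesian_product case_prod_unfold)
    also have "\<dots> = (\<Sum>Js\<in>osp U (k - 1). \<Sum>t<k. W a (k - 1) Js S)"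
    proof (intro sum.cong refl)
      fix Js t assume "Js \<in> osp U (k - 1)" "t \<in> {..<k}"
      then show "W a k (ins t {p} Js) S = W a (k - 1) Js S"
        by (intro W_A[where a=a and p=p, OF _ _ ap]) (auto simp: osp_def)
    qed
    also have "\<dots> = of_nat k * (\<Sum>Js\<in>osp U (k - 1). W a (k - 1) Js S)"
      by (simp add: sum_distrib_left)
    finally show ?thesis .
  qed
  moreover have "(\<Sum>Is\<in>SB. W a k Is S) =
      (2 * of_nat S + of_nat k - 2 * of_nat (card U)) * (\<Sum>Js\<in>osp U k. W a k Js S)"
  proof -
    have "(\<Sum>Is\<in>SB. W a k Is S) =
        (\<Sum>x\<in>osp U k \<times> {..<k}. W a k ((\<lambda>(Js, j). Js[j := insert p (Js ! j)]) x) S)"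
      unfolding SB_def by (rule sum.reindex_bij_betw[OF bij_B[OF pU], symmetric])
    also have "\<dots> = (\<Sum>Js\<in>osp U k. \<Sum>j<k. W a k (Js[j := insert p (Js ! j)]) S)"
      by (simp add: sum.cartesian_product case_prod_unfold)
    also have "\<dots> = (\<Sum>Js\<in>osp U k. (2 * of_nat S + of_nat k - 2 * of_nat (card U)) * W a k Js S)"
      by (intro sum.cong refl W_B[where a=a and p=p, OF _ fU pU ap])
    also have "\<dots> = (2 * of_nat S + of_nat k - 2 * of_nat (card U)) * (\<Sum>Js\<in>osp U k. W a k Js S)"
      by (simp add: sum_distrib_left)
    finally show ?thesis .
  qed
  ultimately show ?thesis by simp
qed

lemma telescope:
  fixes f :: "nat \<Rightarrow> rat"
  shows "(\<Sum>k=1..n. f k - f (k - 1)) = f n - f 0"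
  by (induction n) auto

lemma coef1:
  assumes "g \<ge> 2"
  shows "(-1) ^ Suc j * fact (2 * g - 3 + Suc j) / fact (Suc j) * of_nat (Suc j) =
     - ((-1) ^ j * fact (2 * g - 2 + j) / fact j :: rat)"
proof -
  have e: "2 * g - 3 + Suc j = 2 * g - 2 + j" using assms by simp
  have aux: "x / (s * f) * s = x / f" if "s \<noteq> 0" "f \<noteq> 0" for x s f :: rat
    using that by (simp add: field_simps)
  have fs: "fact (Suc j) = (of_nat (Suc j) :: rat) * fact j" by (rule fact_Suc)
  have "(-1) ^ Suc j * fact (2 * g - 3 + Suc j) / fact (Suc j) * of_nat (Suc j) =
        (-1) ^ Suc j * fact (2 * g - 2 + j) / (fact j :: rat)"
    unfolding e fs by (rule aux) simp_all
  then show ?thesis by simp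
qed

lemma coef2:
  assumes "g \<ge> 2" "k \<ge> 1"
  shows "(-1) ^ k * fact (2 * g - 3 + k) / fact k * of_nat (2 * g - 2 + k) =
     ((-1) ^ k * fact (2 * g - 2 + k) / fact k :: rat)"
proof -
  have e: "2 * g - 2 + k = Suc (2 * g - 3 + k)" using assms by simp
  show ?thesis unfolding e fact_Suc by (simp add: field_simps)
qed

lemma Pgn_vanish:
  assumes g: "g \<ge> 2" and n: "n \<ge> 2" and p: "p \<in> {1..n}" and ap: "a p = 0"
  shows "Pgn g n a = 0"
proof -
  define U where "U = {1..n} - {p}"
  define S where "S = g - 2 + n"
  have fU: "finite U" and pU: "p \<notin> U" and ins: "insert p U = {1..n}" using p unfolding U_def by auto
  have cU: "card U = n - 1" using p unfolding U_def by simp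
  define T where "T j = (\<Sum>Js\<in>osp U j. W a j Js S)" for j
  define D where "D j = ((-1) ^ j * fact (2 * g - 2 + j) / fact j :: rat)" for j
  define c where "c k = ((-1) ^ k * fact (2 * g - 3 + k) / fact k :: rat)" for k
  have "Pgn g n a = (\<Sum>k=1..n. c k * (\<Sum>Is\<in>osp {1..n} k. W a k Is S))"
    unfolding Pgn_alt c_def W_def S_def osp_nat by simp
  also have "\<dots> = (\<Sum>k=1..n. D k * T k - D (k - 1) * T (k - 1))"
  proof (rule sum.cong[OF refl])
    fix k assume k: "k \<in> {1..n}"
    then obtain j where j: "k = Suc j" by (cases k) auto
    have st: "(\<Sum>Is\<in>osp {1..n} k. W a k Is S) =
      of_nat k * T (k - 1) + (2 * of_nat S + of_nat k - 2 * of_nat (card U)) * T k"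
      unfolding T_def ins[symmetric] using k by (intro step_k[where a=a and p=p, OF fU pU _ ap]) auto
    have e: "(2 * of_nat S + of_nat k - 2 * of_nat (card U) :: rat) = of_nat (2 * g - 2 + k)"
      unfolding cU S_def using g n by (simp add: of_nat_diff)
    have c1: "c k * of_nat k = - D (k - 1)" unfolding c_def D_def j using coef1[OF g] by simp
    have c2: "c k * of_nat (2 * g - 2 + k) = D k" unfolding c_def D_def using coef2[OF g] k by simp
    have "c k * (\<Sum>Is\<in>osp {1..n} k. W a k Is S) =
       (c k * of_nat k) * T (k - 1) + (c k * of_nat (2 * g - 2 + k)) * T k"
      unfolding st e by (simp add: algebra_simps)
    also have "\<dots> = D k * T k - D (k - 1) * T (k - 1)" unfolding c1 c2 by simp
    finally show "c k * (\<Sum>Is\<in>osp {1..n} k. W a k Is S) = D k * T k - D (k - 1) * T (k - 1)" .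
  qed
  also have "\<dots> = D n * T n - D 0 * T 0" by (rule telescope)
  also have "T n = 0"
  proof -
    have "osp U n = {}" using osp_le_card[OF _ fU] cU n by fastforce
    then show ?thesis unfolding T_def by simp
  qed
  also have "T 0 = 0"
  proof -
    have "U \<noteq> {}" using cU n by auto
    then have "osp U 0 = {}" unfolding osp_def by auto
    then show ?thesis unfolding T_def by simp
  qed
  finally show ?thesis by simp
qed

theorem corollary5p4:
  fixes g n :: nat
  assumes "g \<ge> 2" and "n \<ge> 2"
  shows "\<exists>Q. is_poly_deg_le n (2 * g - 4 + n) Q \<and>
             (\<forall>a. Pgn g n a = (\<Prod>i=1..n. a i) * Q a)"
proof -
  have "\<exists>Q. is_poly_deg_le n (2 * (g - 2 + n) - n) Q \<and> (\<forall>a. Pgn g n a = (\<Prod>i=1..n. a i) * Q a)"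
  proof (rule poly_divide[OF Pgn_poly])
    fix i a assume "i \<in> {1..n}" "a i = (0::rat)"
    then show "Pgn g n a = 0" using Pgn_vanish assms by blast
  qed
  then obtain Q where Q: "is_poly_deg_le n (2 * (g - 2 + n) - n) Q"
    "\<forall>a. Pgn g n a = (\<Prod>i=1..n. a i) * Q a" by blast
  have eq: "2 * (g - 2 + n) - n = 2 * g - 4 + n" using assms by simp
  have Q1: "is_poly_deg_le n (2 * g - 4 + n) Q" using Q(1) unfolding eq .
  show ?thesis using Q1 Q(2) by blast
qed


end
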